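(* Let $i\ge 3$ and $k\ge 3$ be integers, let $p$ be a nonnegative integer, and put $r=\lfloor (F_i-1)/F_k\rfloor$. If $r\ge p$ and $(r,p)\ne(0,0)$, then $$g_p(F_i,F_{i+2},F_{i+k})=\begin{cases}(F_i-rF_k-1)F_{i+2}+(r+p)F_{i+k}-F_i & \text{if } (F_i-rF_k)F_{i+2}\ge F_{k-2}F_i,\\ (F_k-1)F_{i+2}+(r+p-1)F_{i+k}-F_i & \text{if } (F_i-rF_k)F_{i+2}< F_{k-2}F_i.\end{cases}$$
   Context: Fibonacci numbers: $F_0=0$, $F_1=1$, $F_n=F_{n-1}+F_{n-2}$. For positive integers $a_1,\dots,a_l$ with $\gcd(a_1,\dots,a_l)=1$ and an integer $n$, let $d(n;a_1,\dots,a_l)$ be the number of tuples $(x_1,\dots,x_l)$ of nonnegative integers with $a_1x_1+\dots+a_lx_l=n$. For a nonnegative integer $p$, the $p$-Frobenius number $g_p(a_1,\dots,a_l)$ is the largest integer $n$ with $d(n;a_1,\dots,a_l)\le p$. *)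

theory Defs
  imports "HOL-Analysis.Analysis" "HOL-Number_Theory.Fib"
begin

definition num_repr :: "int \<Rightarrow> nat list \<Rightarrow> nat" where
  "num_repr n as = card {xs :: nat list. length xs = length as \<and>
      (\<Sum>j<length as. int (as ! j) * int (xs ! j)) = n}"

definition p_frobenius :: "nat \<Rightarrow> nat list \<Rightarrow> int" where
  "p_frobenius p as = (GREATEST n :: int. num_repr n as \<le> p)"

end

theory Submission
  imports Defs
begin

lemma fibfacts:
  fixes i k :: nat
  assumes "i \<ge> 3" "k \<ge> 3"
  shows "fib (i+k) + fib (k-2) * fib i = fib k * fib (i+2)"
    and "coprime (fib i) (fib (i+2))"
    and "2 * fib i \<le> fib (i+2)"
    and "2 * fib (k-2) \<le> fib k"
    and "fib (k-2) \<ge> 1"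
    and "fib (k-2) * fib i \<le> fib (i+k)"
    and "fib i \<ge> 1"
proof -
  obtain k' where k': "k = k' + 2" using assms(2) by (metis add.commute le_add_diff_inverse2 le_trans nat_le_linear numeral_le_iff semiring_norm(69) semiring_norm(72) one_le_numeral)
  have fa: "fib (i+k) = fib k * fib (i+1) + fib (k-1) * fib i"
    using fib_add[of i "k'+1"] k' by (simp add: add.commute add.left_commute)
  have fk: "fib k = fib (k-1) + fib (k-2)" using k' fib_plus_2[of k'] by simp
  have fi: "fib (i+2) = fib (i+1) + fib i" by (simp add: fib_plus_2)
  show "fib (i+k) + fib (k-2) * fib i = fib k * fib (i+2)"
  proof -
    have h: "fib k * fib i = fib (k-1) * fib i + fib (k-2) * fib i" using fk by (simp add: add_mult_distrib)
    show ?thesis unfolding fa fi distrib_left h by simp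
  qed
  have "gcd (fib i) (fib (2 + i)) = gcd (fib i) (fib 2)" by (rule gcd_fib_add)
  then show "coprime (fib i) (fib (i+2))" by (simp add: coprime_iff_gcd_eq_1 add.commute)
  have "fib i \<le> fib (i+1)" by (rule fib_mono) simp
  then show "2 * fib i \<le> fib (i+2)" using fi by simp
  have "fib (k-2) \<le> fib (k-1)" by (rule fib_mono) simp
  then show "2 * fib (k-2) \<le> fib k" using fk by simp
  show "fib (k-2) \<ge> 1" using fib_neq_0_nat[of "k-2"] assms by simp
  have "fib (k-2) \<le> fib (k-1)" by (rule fib_mono) simp
  then have "fib (k-2) * fib i \<le> fib (k-1) * fib i" by (rule mult_right_mono) simp
  then show "fib (k-2) * fib i \<le> fib (i+k)" using fa by linarith
  show "fib i \<ge> 1" using fib_neq_0_nat[of i] assms by simp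
qed

locale FS =
  fixes a b c Fk al r s p :: int
  assumes c_def: "c = Fk*b - al*a" and a_def: "a = r*Fk + s" and s1: "1 \<le> s" and s2: "s \<le> Fk"
    and al1: "1 \<le> al" and al2: "2*al \<le> Fk" and ab: "2*a \<le> b" and alc: "al*a \<le> c"
    and p0: "0 \<le> p" and pr: "p \<le> r" and r1: "1 \<le> r" and cop: "coprime a b"
begin

definition R :: "int \<Rightarrow> (nat \<times> nat \<times> nat) set" where
  "R n = {(x,y,z). a * int x + b * int y + c * int z = n}"

lemma R_eq: "R n = {(x,y,z). a * int x + b * int y + c * int z = n}" by (simp add: R_def)

lemma Fka: "Fk \<le> a" "Fk \<ge> 2"
proof -
  have "1*Fk \<le> r*Fk" using r1 al1 al2 by (intro mult_right_mono) auto
  then show "Fk \<le> a" using a_def s1 by simp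
  show "Fk \<ge> 2" using al1 al2 by simp
qed

lemma pos: "a \<ge> 2" "b \<ge> 4" "c \<ge> 2"
proof -
  show "a \<ge> 2" using Fka s1 a_def by linarith
  then show "b \<ge> 4" using ab by simp
  have "1 * a \<le> al * a" using al1 \<open>a\<ge>2\<close> by (intro mult_right_mono) auto
  then show "c \<ge> 2" using alc \<open>a\<ge>2\<close> by linarith
qed

lemma pFk: "p*Fk \<le> r*Fk" using pr Fka by (intro mult_right_mono) auto

lemma finR: "finite (R n)"
proof -
  have "R n \<subseteq> {0..nat n} \<times> {0..nat n} \<times> {0..nat n}"
  proof
    fix t assume "t \<in> R n"
    then obtain x y z where t: "t = (x,y,z)" and e: "a * int x + b * int y + c * int z = n"
      unfolding R_def by auto
    have "1 * int x \<le> a * int x" "1 * int y \<le> b * int y" "1 * int z \<le> c * int z"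
      using pos by (intro mult_right_mono; simp)+
    moreover have "0 \<le> a * int x" "0 \<le> b * int y" "0 \<le> c * int z" using pos by auto
    ultimately show "t \<in> {0..nat n} \<times> {0..nat n} \<times> {0..nat n}" using e t by auto
  qed
  then show ?thesis by (rule finite_subset) auto
qed

lemma key:
  fixes x y z X0 N0 :: int
  assumes "a*x + b*y + c*z = X0*a + N0*b"
  shows "\<exists>j. y = N0 + j*a - Fk*z \<and> x = X0 + z*al - j*b"
proof -
  have e: "(x - z*al - X0)*a = (N0 - y - Fk*z)*b" using assms unfolding c_def by (simp add: algebra_simps)
  then have "a dvd (N0 - y - Fk*z)*b" by (metis dvd_triv_right)
  then have "a dvd (N0 - y - Fk*z)" using cop by (simp add: coprime_dvd_mult_left_iff)
  then obtain t where t: "N0 - y - Fk*z = a*t" by blast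
  then have "(x - z*al - X0)*a = (t*b)*a" using e by (simp add: algebra_simps)
  then have "x - z*al - X0 = t*b" using pos by simp
  then show ?thesis using t by (intro exI[of _ "-t"]) (simp add: algebra_simps)
qed

lemma A1: "card (R ((s-1)*b + (r+p)*c - a)) \<le> nat p"
proof -
  let ?T = "(s-1)*b + (r+p)*c - a"
  let ?f = "\<lambda>z::int. (nat(b - (r+p)*al - 1 + z*al), nat(p*Fk - 1 - Fk*z), nat z)"
  have "R ?T \<subseteq> ?f ` {0..<p}"
  proof
    fix t assume "t \<in> R ?T"
    then obtain x y z where t: "t = (x,y,z)" and e: "a * int x + b * int y + c * int z = ?T"
      unfolding R_def by auto
    define X Y Z where "X = int x" and "Y = int y" and "Z = int z"
    have X0: "X \<ge> 0" "Y \<ge> 0" "Z \<ge> 0" unfolding X_def Y_def Z_def by auto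
    have "a*X + b*Y + c*Z = (b - (r+p)*al - 1)*a + (p*Fk - 1)*b"
      using e unfolding X_def Y_def Z_def c_def by (simp add: a_def algebra_simps)
    then obtain j where Y: "Y = p*Fk - 1 + j*a - Fk*Z" and X: "X = b - (r+p)*al - 1 + Z*al - j*b"
      using key by blast
    have FkZ: "Fk*Z \<ge> 0" using X0 Fka by simp
    have j0: "j = 0"
    proof (rule ccontr)
      assume "j \<noteq> 0"
      then consider "j \<le> -1" | "j = 1" | "j \<ge> 2" by linarith
      then show False
      proof cases
        case 1
        then have "j*a \<le> (-1)*a" using pos by (intro mult_right_mono) auto
        then show ?thesis using Y X0 FkZ pFk a_def s1 by linarith
      next
        case 2
        then have h: "al*(Z - r - p) \<ge> 1" using X X0 by (simp add: algebra_simps)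
        have "Z - r - p \<ge> 1"
        proof (rule ccontr)
          assume "\<not> ?thesis"
          then have "al*(Z - r - p) \<le> al*0" using al1 by (intro mult_left_mono) auto
          then show False using h by simp
        qed
        then have "Fk*(Z - r - p) \<ge> Fk*1" using Fka by (intro mult_left_mono) auto
        then show False using Y 2 X0 a_def s2 by (simp add: algebra_simps)
      next
        case 3
        have jb0: "(j-1)*b \<ge> (j-1)*(2*a)" using 3 ab by (intro mult_left_mono) auto
        then have jb: "(j-1)*b \<ge> 2*((j-1)*a)" by (simp add: algebra_simps)
        have ja: "(j-1)*a \<ge> 0" using 3 pos by simp
        have h: "al*(Z - r - p) \<ge> (j-1)*b + 1" using X X0 by (simp add: algebra_simps)
        have "Z - r - p \<ge> 1"
        proof (rule ccontr)
          assume "\<not> ?thesis"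
          then have "al*(Z - r - p) \<le> al*0" using al1 by (intro mult_left_mono) auto
          then show False using h jb ja by simp
        qed
        then have "Fk*(Z - r - p) \<ge> (2*al)*(Z - r - p)" using al2 by (intro mult_right_mono) auto
        then have "Fk*(Z - r - p) \<ge> 2*((j-1)*b + 1)" using h by simp
        moreover have "Fk*(Z - r - p) \<le> (j-1)*a + s - 1" using Y X0 a_def by (simp add: algebra_simps)
        moreover have "(j-1)*a \<ge> 1*a" using 3 pos by (intro mult_right_mono) auto
        ultimately show False using jb s2 Fka by (smt (verit))
      qed
    qed
    have "Fk*Z < Fk*p" using Y j0 X0 by (simp add: algebra_simps)
    then have "Z < p" using Fka by simp
    moreover have ex: "x = nat X" "y = nat Y" "z = nat Z" unfolding X_def Y_def Z_def by simp_all
    have "t = ?f Z" unfolding t ex X Y j0 by (simp add: algebra_simps)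
    ultimately show "t \<in> ?f ` {0..<p}" using X0 by auto
  qed
  then have "card (R ?T) \<le> card (?f ` {0..<p})" by (intro card_mono) auto
  also have "\<dots> \<le> card {0..<p}" by (rule card_image_le) auto
  finally show ?thesis by simp
qed

lemma A2: "card (R ((Fk-1)*b + (r+p-1)*c - a)) \<le> nat p"
proof -
  let ?T = "(Fk-1)*b + (r+p-1)*c - a"
  let ?f = "\<lambda>z::int. (nat(b - (r+p-1)*al - 1 + z*al), nat(p*Fk - s - 1 - Fk*z), nat z)"
  have "R ?T \<subseteq> ?f ` {0..<p}"
  proof
    fix t assume "t \<in> R ?T"
    then obtain x y z where t: "t = (x,y,z)" and e: "a * int x + b * int y + c * int z = ?T"
      unfolding R_def by auto
    define X Y Z where "X = int x" and "Y = int y" and "Z = int z"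
    have X0: "X \<ge> 0" "Y \<ge> 0" "Z \<ge> 0" unfolding X_def Y_def Z_def by auto
    have "a*X + b*Y + c*Z = (b - (r+p-1)*al - 1)*a + (p*Fk - s - 1)*b"
      using e unfolding X_def Y_def Z_def c_def by (simp add: a_def algebra_simps)
    then obtain j where Y: "Y = p*Fk - s - 1 + j*a - Fk*Z" and X: "X = b - (r+p-1)*al - 1 + Z*al - j*b"
      using key by blast
    have FkZ: "Fk*Z \<ge> 0" using X0 Fka by simp
    have j0: "j = 0"
    proof (rule ccontr)
      assume "j \<noteq> 0"
      then consider "j \<le> -1" | "j = 1" | "j \<ge> 2" by linarith
      then show False
      proof cases
        case 1
        then have "j*a \<le> (-1)*a" using pos by (intro mult_right_mono) auto
        then show ?thesis using Y X0 FkZ pFk a_def s1 by linarith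
      next
        case 2
        then have h: "al*(Z - r - p + 1) \<ge> 1" using X X0 by (simp add: algebra_simps)
        have "Z - r - p \<ge> 0"
        proof (rule ccontr)
          assume "\<not> ?thesis"
          then have "al*(Z - r - p + 1) \<le> al*0" using al1 by (intro mult_left_mono) auto
          then show False using h by simp
        qed
        then have "Fk*(Z - r - p) \<ge> Fk*0" using Fka by (intro mult_left_mono) auto
        then show False using Y 2 X0 a_def s2 by (simp add: algebra_simps)
      next
        case 3
        have jb0: "(j-1)*b \<ge> (j-1)*(2*a)" using 3 ab by (intro mult_left_mono) auto
        then have jb: "(j-1)*b \<ge> 2*((j-1)*a)" by (simp add: algebra_simps)
        have ja: "(j-1)*a \<ge> 0" using 3 pos by simp
        have h: "al*(Z - r - p + 1) \<ge> (j-1)*b + 1" using X X0 by (simp add: algebra_simps)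
        have "Z - r - p + 1 \<ge> 1"
        proof (rule ccontr)
          assume "\<not> ?thesis"
          then have "al*(Z - r - p + 1) \<le> al*0" using al1 by (intro mult_left_mono) auto
          then show False using h jb ja by simp
        qed
        then have "Fk*(Z - r - p + 1) \<ge> (2*al)*(Z - r - p + 1)" using al2 by (intro mult_right_mono) auto
        then have "Fk*(Z - r - p + 1) \<ge> 2*((j-1)*b + 1)" using h by simp
        moreover have "Fk*(Z - r - p + 1) \<le> (j-1)*a - 1 + Fk" using Y X0 a_def by (simp add: algebra_simps)
        moreover have "(j-1)*a \<ge> 1*a" using 3 pos by (intro mult_right_mono) auto
        ultimately show False using jb s2 Fka by (smt (verit))
      qed
    qed
    have "Fk*Z < Fk*p" using Y j0 X0 s1 by (simp add: algebra_simps)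
    then have "Z < p" using Fka by simp
    moreover have ex: "x = nat X" "y = nat Y" "z = nat Z" unfolding X_def Y_def Z_def by simp_all
    have "t = ?f Z" unfolding t ex X Y j0 by (simp add: algebra_simps)
    ultimately show "t \<in> ?f ` {0..<p}" using X0 by auto
  qed
  then have "card (R ?T) \<le> card (?f ` {0..<p})" by (intro card_mono) auto
  also have "\<dots> \<le> card {0..<p}" by (rule card_image_le) auto
  finally show ?thesis by simp
qed

lemma mono_val:
  fixes Y Z Y' Z' :: int
  assumes "0 \<le> Y" "Y \<le> Y'" "0 \<le> Z" "Z \<le> Z'"
  shows "Y*b + Z*c \<le> Y'*b + Z'*c"
proof -
  have "Y*b \<le> Y'*b" using assms pos by (intro mult_right_mono) auto
  moreover have "Z*c \<le> Z'*c" using assms pos by (intro mult_right_mono) auto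
  ultimately show ?thesis by simp
qed

lemma B:
  assumes n: "n > max ((s-1)*b + (r+p)*c) ((Fk-1)*b + (r+p-1)*c) - a"
  shows "card (R n) \<ge> nat (p+1)"
proof -
  define E1 where "E1 = (s-1)*b + (r+p)*c"
  define E2 where "E2 = (Fk-1)*b + (r+p-1)*c"
  define M where "M = max E1 E2"
  have nM: "n > M - a" using n unfolding M_def E1_def E2_def by simp
  obtain uu vv where uv0: "uu*a + vv*b = gcd a b" using bezout_int by blast
  have uv: "uu*a + vv*b = 1" using uv0 cop by (simp add: coprime_iff_gcd_eq_1)
  define y where "y = (n* vv) mod a"
  define w where "w = (n* vv) div a"
  have y0: "0 \<le> y" "y < a" unfolding y_def using pos by auto
  have e1: "n* vv = w*a + y" unfolding y_def w_def by simp
  have "n - y*b - a*(n*uu + w*b) = n*(1 - uu*a - vv*b) + b*(n* vv - w*a - y)" by (simp add: algebra_simps)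
  moreover have "1 - uu*a - vv*b = 0" "n * vv - w*a - y = 0" using uv e1 by simp_all
  ultimately have "n - y*b = a*(n*uu + w*b)" by simp
  then have dy: "a dvd (n - y*b)" by simp
  define q where "q = y div Fk"
  define yy where "yy = y mod Fk"
  have yq: "y = q*Fk + yy" unfolding q_def yy_def by simp
  have yy: "0 \<le> yy" "yy < Fk" unfolding yy_def using Fka by auto
  have q0: "q \<ge> 0" unfolding q_def using y0 Fka by (simp add: pos_imp_zdiv_nonneg_iff)
  have qr: "q \<le> r"
  proof (rule ccontr)
    assume "\<not> q \<le> r"
    then have "q*Fk \<ge> (r+1)*Fk" using Fka by (intro mult_right_mono) auto
    then show False using yq yy y0 a_def s2 by (simp add: algebra_simps)
  qed
  have qrs: "q = r \<Longrightarrow> yy \<le> s - 1" using yq y0 a_def by simp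
  define u0 where "u0 = yy*b + q*c"
  have u0e: "n - u0 = (n - y*b) + a*(q*al)" unfolding u0_def yq c_def by (simp add: algebra_simps)
  have du0: "a dvd (n - u0)" unfolding u0e using dy by (intro dvd_add) auto
  define g where "g = (\<lambda>(Y::int,Z::int). (nat ((n - (Y*b + Z*c)) div a), nat Y, nat Z))"
  have memb: "g (Y,Z) \<in> R n" if h: "0 \<le> Y" "0 \<le> Z" "a dvd (n - (Y*b + Z*c))" "Y*b + Z*c \<le> M" for Y Z
  proof -
    obtain k where k: "n - (Y*b + Z*c) = a*k" using h(3) by blast
    have "a*k > a*(-1)" using k h(4) nM by simp
    then have "k > -1" using pos mult_less_cancel_left_pos[of a "-1" k] by linarith
    then have "k \<ge> 0" by simp
    have "(n - (Y*b + Z*c)) div a = k" using k pos by simp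
    then show ?thesis unfolding g_def R_def using k h \<open>k\<ge>0\<close> by (simp add: algebra_simps)
  qed
  define y1 where "y1 = (if yy + s < Fk then yy + s else yy + s - Fk)"
  define z1 where "z1 = (if yy + s < Fk then q + r else q + r + 1)"
  define P where "P = (\<lambda>m. (yy + m*Fk, q - m)) ` {0..min q p}"
  define Q where "Q = (\<lambda>l. (y1 + l*Fk, z1 - l)) ` {0..<p - q}"
  have Pprop: "0 \<le> Y \<and> 0 \<le> Z \<and> a dvd (n - (Y*b + Z*c)) \<and> Y*b + Z*c \<le> M \<and> Z \<le> q"
    if h: "(Y,Z) \<in> P" for Y Z
  proof -
    obtain m where m: "0 \<le> m" "m \<le> q" "m \<le> p" and YZ: "Y = yy + m*Fk" "Z = q - m"
      using h unfolding P_def by auto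
    have "m*Fk \<ge> 0" using m Fka by simp
    then have Y0: "Y \<ge> 0" using YZ yy by simp
    have val: "Y*b + Z*c = u0 + a*(m*al)" unfolding YZ u0_def c_def by (simp add: algebra_simps)
    have dv: "a dvd (n - (Y*b + Z*c))" unfolding val using du0
      by (metis diff_diff_eq dvd_diff dvd_triv_left)
    have "m*(al*a) \<le> m*c" using m alc by (intro mult_left_mono) auto
    then have vb: "Y*b + Z*c \<le> yy*b + (q+m)*c" unfolding val u0_def by (simp add: algebra_simps)
    have "yy*b + (q+m)*c \<le> M"
    proof (cases "q = r")
      case True
      then have "yy*b + (q+m)*c \<le> (s-1)*b + (r+p)*c" using yy qrs m q0 by (intro mono_val) auto
      then show ?thesis unfolding M_def E1_def by simp
    next
      case False
      then have "yy*b + (q+m)*c \<le> (Fk-1)*b + (r+p-1)*c" using yy qr m q0 by (intro mono_val) auto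
      then show ?thesis unfolding M_def E2_def by simp
    qed
    then show ?thesis using Y0 YZ m dv vb by simp
  qed
  have Qprop: "0 \<le> Y \<and> 0 \<le> Z \<and> a dvd (n - (Y*b + Z*c)) \<and> Y*b + Z*c \<le> M \<and> Z \<ge> q + 1"
    if h: "(Y,Z) \<in> Q" for Y Z
  proof -
    obtain l where l: "0 \<le> l" "l < p - q" and YZ: "Y = y1 + l*Fk" "Z = z1 - l"
      using h unfolding Q_def by auto
    have lF: "l*Fk \<ge> 0" using l Fka by simp
    have lc: "l*(al*a) \<le> l*c" using l alc by (intro mult_left_mono) auto
    have val0: "Y*b + Z*c = y1*b + z1*c + l*(al*a)" unfolding YZ by (simp add: c_def algebra_simps)
    then have vb: "Y*b + Z*c \<le> y1*b + (z1+l)*c" using lc by (simp add: algebra_simps)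
    show ?thesis
    proof (cases "yy + s < Fk")
      case True
      then have y1e: "y1 = yy + s" and z1e: "z1 = q + r" unfolding y1_def z1_def by auto
      have val: "Y*b + Z*c = u0 + a*(b - r*al + l*al)"
        unfolding val0 u0_def y1e z1e by (simp add: c_def a_def algebra_simps)
      have dv: "a dvd (n - (Y*b + Z*c))" unfolding val using du0
        by (metis diff_diff_eq dvd_diff dvd_triv_left)
      have "y1*b + (z1+l)*c \<le> (Fk-1)*b + (r+p-1)*c" using y1e z1e True yy q0 l pr s1
        by (intro mono_val) auto
      then show ?thesis using vb dv lF YZ y1e z1e yy s1 l pr q0 unfolding M_def E2_def by auto
    next
      case False
      then have y1e: "y1 = yy + s - Fk" and z1e: "z1 = q + r + 1" unfolding y1_def z1_def by auto
      have val: "Y*b + Z*c = u0 + a*(b - (r+1)*al + l*al)"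
        unfolding val0 u0_def y1e z1e by (simp add: c_def a_def algebra_simps)
      have dv: "a dvd (n - (Y*b + Z*c))" unfolding val using du0
        by (metis diff_diff_eq dvd_diff dvd_triv_left)
      have "y1*b + (z1+l)*c \<le> (s-1)*b + (r+p)*c" using y1e z1e False yy q0 l pr s1
        by (intro mono_val) auto
      then show ?thesis using vb dv lF YZ y1e z1e yy s1 l pr q0 False unfolding M_def E1_def by auto
    qed
  qed
  have PQ: "P \<inter> Q = {}"
  proof (rule equals0I)
    fix x assume "x \<in> P \<inter> Q"
    moreover obtain Y Z where "x = (Y,Z)" by (cases x)
    ultimately have "(Y,Z) \<in> P" "(Y,Z) \<in> Q" by auto
    then show False using Pprop[of Y Z] Qprop[of Y Z] by linarith
  qed
  have cP: "card P = nat (min q p + 1)" unfolding P_def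
    by (subst card_image) (auto simp: inj_on_def)
  have cQ: "card Q = nat (p - q)" unfolding Q_def
    by (subst card_image) (auto simp: inj_on_def)
  have cS: "card (P \<union> Q) = nat (p + 1)"
  proof -
    have "finite P" "finite Q" unfolding P_def Q_def by auto
    then have "card (P \<union> Q) = card P + card Q" using PQ by (rule card_Un_disjoint)
    also have "\<dots> = nat (p + 1)" unfolding cP cQ using q0 p0 by (simp add: min_def nat_add_distrib[symmetric] add.commute)
    finally show ?thesis .
  qed
  have nn: "0 \<le> Y \<and> 0 \<le> Z \<and> a dvd (n - (Y*b + Z*c)) \<and> Y*b + Z*c \<le> M"
    if "(Y,Z) \<in> P \<union> Q" for Y Z
  proof (cases "(Y,Z) \<in> P")
    case True then show ?thesis using Pprop[of Y Z] by simp
  next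
    case False then show ?thesis using Qprop[of Y Z] that by simp
  qed
  have ing: "inj_on g (P \<union> Q)"
  proof (rule inj_onI)
    fix x1 x2 assume a1: "x1 \<in> P \<union> Q" "x2 \<in> P \<union> Q" "g x1 = g x2"
    obtain Y1 Z1 where x1: "x1 = (Y1,Z1)" by (cases x1)
    obtain Y2 Z2 where x2: "x2 = (Y2,Z2)" by (cases x2)
    have "nat Y1 = nat Y2" "nat Z1 = nat Z2" using a1(3) unfolding g_def x1 x2 by simp_all
    moreover have "0 \<le> Y1" "0 \<le> Z1" "0 \<le> Y2" "0 \<le> Z2"
      using nn[of Y1 Z1] nn[of Y2 Z2] a1 x1 x2 by auto
    ultimately show "x1 = x2" unfolding x1 x2 by (simp add: eq_nat_nat_iff)
  qed
  have sub: "g ` (P \<union> Q) \<subseteq> R n"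
  proof (rule image_subsetI)
    fix x assume xa: "x \<in> P \<union> Q"
    obtain Y Z where x: "x = (Y,Z)" by (cases x)
    show "g x \<in> R n" unfolding x using nn[of Y Z] xa x by (intro memb) auto
  qed
  have "card (P \<union> Q) = card (g ` (P \<union> Q))" using ing by (simp add: card_image)
  also have "\<dots> \<le> card (R n)" using sub finR by (rule card_mono[rotated])
  finally show ?thesis using cS by simp
qed

end

lemma num_repr3: "num_repr n [a,b,c] = card {(x,y,z). int a * int x + int b * int y + int c * int z = n}"
  unfolding num_repr_def
  apply (rule bij_betw_same_card[symmetric, of "\<lambda>(x,y,z). [x,y,z]"])
  apply (auto simp: bij_betw_def inj_on_def numeral_3_eq_3 lessThan_Suc length_Suc_conv image_def)
  done

theorem theorem5:
  fixes i k p :: nat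
  assumes "i \<ge> 3" and "k \<ge> 3"
    and "\<lfloor>(int (fib i) - 1) / int (fib k)\<rfloor> \<ge> int p"
    and "(\<lfloor>(int (fib i) - 1) / int (fib k)\<rfloor>, int p) \<noteq> (0, 0)"
  shows "let r = \<lfloor>(int (fib i) - 1) / int (fib k)\<rfloor>;
             Fi = int (fib i); Fk = int (fib k); Fi2 = int (fib (i + 2));
             Fik = int (fib (i + k)); Fk2 = int (fib (k - 2))
         in p_frobenius p [fib i, fib (i + 2), fib (i + k)] =
           (if (Fi - r * Fk) * Fi2 \<ge> Fk2 * Fi
            then (Fi - r * Fk - 1) * Fi2 + (r + int p) * Fik - Fi
            else (Fk - 1) * Fi2 + (r + int p - 1) * Fik - Fi)"
proof -
  note ff = fibfacts[OF assms(1,2)]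
  define a where aD: "a = int (fib i)"
  define b where bD: "b = int (fib (i+2))"
  define c where cD: "c = int (fib (i+k))"
  define Fk where FkD: "Fk = int (fib k)"
  define al where alD: "al = int (fib (k-2))"
  define r where rD: "r = (a - 1) div Fk"
  define s where sD: "s = a - r*Fk"
  have rr: "\<lfloor>(int (fib i) - 1) / int (fib k)\<rfloor> = r"
    unfolding rD aD FkD by (metis floor_divide_of_int_eq of_int_of_nat_eq)
  have Fk1: "Fk \<ge> 2" using ff(4,5) unfolding FkD by linarith
  have e1: "c + al*a = Fk*b" using arg_cong[OF ff(1), of int] unfolding aD bD cD FkD alD by simp
  have dm: "a - 1 = r*Fk + (a-1) mod Fk" unfolding rD by simp
  have md: "0 \<le> (a-1) mod Fk" "(a-1) mod Fk < Fk" using Fk1 by auto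
  have r1: "r \<ge> 1" using assms(3,4) rr by auto
  interpret FS a b c Fk al r s "int p"
  proof
    show "c = Fk*b - al*a" using e1 by simp
    show "a = r*Fk + s" unfolding sD by simp
    show "1 \<le> s" "s \<le> Fk" using dm md unfolding sD by linarith+
    show "1 \<le> al" using ff(5) unfolding alD by simp
    show "2*al \<le> Fk" using ff(4) unfolding alD FkD by linarith
    show "2*a \<le> b" using ff(3) unfolding aD bD by linarith
    show "al*a \<le> c" using ff(6) unfolding aD alD cD by (metis of_nat_le_iff of_nat_mult)
    show "0 \<le> int p" by simp
    show "int p \<le> r" using assms(3) rr by simp
    show "1 \<le> r" by (rule r1)
    show "coprime a b" using ff(2) coprime_int_iff[of "fib i" "fib (i+2)"] unfolding aD bD by blast
  qed
  define E1 where "E1 = (s-1)*b + (r+int p)*c"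
  define E2 where "E2 = (Fk-1)*b + (r+int p-1)*c"
  have nr: "num_repr n [fib i, fib (i + 2), fib (i + k)] = card (R n)" for n
    unfolding R_eq num_repr3 by (simp only: aD bD cD)
  have pf: "p_frobenius p [fib i, fib (i + 2), fib (i + k)] = max E1 E2 - a"
    unfolding p_frobenius_def
  proof (rule Greatest_equality)
    show "num_repr (max E1 E2 - a) [fib i, fib (i + 2), fib (i + k)] \<le> p"
      unfolding nr using A1 A2 unfolding E1_def E2_def max_def by auto
    fix y assume "num_repr y [fib i, fib (i + 2), fib (i + k)] \<le> p"
    then have "card (R y) \<le> p" unfolding nr .
    show "y \<le> max E1 E2 - a"
    proof (rule ccontr)
      assume "\<not> ?thesis"
      then have "card (R y) \<ge> nat (int p + 1)" using B unfolding E1_def E2_def by auto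
      then show False using \<open>card (R y) \<le> p\<close> by linarith
    qed
  qed
  have diff: "E1 - E2 = s*b - al*a" unfolding E1_def E2_def using e1 by (simp add: algebra_simps)
  have fin: "max E1 E2 - a = (if (a - r*Fk)*b \<ge> al*a then (a - r*Fk - 1)*b + (r + int p)*c - a
      else (Fk - 1)*b + (r + int p - 1)*c - a)"
    unfolding sD[symmetric] using diff unfolding E1_def E2_def by (auto simp: max_def)
  show ?thesis
    unfolding Let_def using pf fin rr unfolding aD bD cD FkD alD by simp
qed

end
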